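(* Let $(\mathsf{K},d)$ be a compact metric space and let $\mathsf{S}_1\supseteq\mathsf{S}_2\supseteq\dots\supseteq\mathsf{S}_T$ be nonempty subsets of $\mathsf{K}$ such that $d_H(\mathsf{S}_i,\mathsf{S}_j)>\varepsilon$ for all $i\ne j$. Then $T\le N(\mathsf{K},\varepsilon)$.
   Context: $d_H$ is the Hausdorff distance induced by $d$. $N(\mathsf{K},r)$ is the $r$-packing number: the maximal $n$ such that there exist $\theta_1,\dots,\theta_n\in\mathsf{K}$ with $d(\theta_i,\theta_j)>r$ for all $i\ne j$. *)

theory Defs
  imports "HOL-Analysis.Analysis" "HOL-Library.Extended_Nat"
begin

text \<open>Used only for nonempty subsets of a compact set, where both suprema are finite.\<close>
definition hausdorff_dist :: "'a::metric_space set \<Rightarrow> 'a set \<Rightarrow> real" where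
  "hausdorff_dist A B = max (SUP a\<in>A. infdist a B) (SUP b\<in>B. infdist b A)"

definition packing_number :: "'a::metric_space set \<Rightarrow> real \<Rightarrow> enat" where
  "packing_number K r = Sup {enat n | n. \<exists>\<theta> :: nat \<Rightarrow> 'a.
      (\<forall>i<n. \<theta> i \<in> K) \<and> (\<forall>i<n. \<forall>j<n. i \<noteq> j \<longrightarrow> dist (\<theta> i) (\<theta> j) > r)}"

end

theory Submission
  imports Defs
begin

lemma nested_le:
  assumes "\<forall>i\<in>{1..<T}. S (Suc i) \<subseteq> S i" "1 \<le> i" "i \<le> j" "j \<le> T"
  shows "S j \<subseteq> (S i :: 'a set)"
  using assms(3,4)
proof (induction j rule: dec_induct)
  case base then show ?case by simp
next
  case (step n)
  then have "S (Suc n) \<subseteq> S n" using assms(1,2) by auto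
  then show ?case using step by auto
qed

lemma exists_far:
  fixes A B :: "'a::metric_space set"
  assumes "A \<noteq> {}" "B \<noteq> {}" "B \<subseteq> A" "bounded A"
    and "hausdorff_dist A B > \<epsilon>"
  shows "\<exists>a\<in>A. infdist a B > \<epsilon>"
proof -
  have z: "(SUP b\<in>B. infdist b A) = 0"
    using assms(2,3) by (simp add: infdist_zero subset_iff)
  show ?thesis
  proof (cases "(SUP a\<in>A. infdist a B) > \<epsilon>")
    case True
    obtain b0 where b0: "b0 \<in> B" using assms(2) by auto
    obtain e where e: "\<forall>y\<in>A. dist b0 y \<le> e"
      using assms(4) bounded_any_center by blast
    have "bdd_above ((\<lambda>a. infdist a B) ` A)"
    proof (rule bdd_aboveI2)
      fix a assume "a \<in> A"
      then have "infdist a B \<le> dist a b0" using b0 infdist_le by blast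
      also have "\<dots> \<le> e" using e \<open>a \<in> A\<close> by (simp add: dist_commute)
      finally show "infdist a B \<le> e" .
    qed
    from less_cSUP_iff[OF assms(1) this] True show ?thesis by blast
  next
    case False
    then have "0 > \<epsilon>" using assms(5) z unfolding hausdorff_dist_def by auto
    obtain a where a: "a \<in> A" using assms(1) by auto
    have "0 \<le> infdist a B" by (rule infdist_nonneg)
    then show ?thesis using a \<open>0 > \<epsilon>\<close> by force
  qed
qed

theorem lemma2:
  fixes K :: "'a::metric_space set" and S :: "nat \<Rightarrow> 'a set"
    and T :: nat and \<epsilon> :: real
  assumes "compact K"
    and "\<forall>i\<in>{1..T}. S i \<subseteq> K \<and> S i \<noteq> {}"
    and "\<forall>i\<in>{1..<T}. S (Suc i) \<subseteq> S i"
    and "\<forall>i\<in>{1..T}. \<forall>j\<in>{1..T}. i \<noteq> j \<longrightarrow> hausdorff_dist (S i) (S j) > \<epsilon>"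
  shows "enat T \<le> packing_number K \<epsilon>"
proof -
  have bK: "bounded K" using assms(1) compact_imp_bounded by blast
  have far: "\<exists>a\<in>S i. infdist a (S (Suc i)) > \<epsilon>" if "1 \<le> i" "i < T" for i
  proof (rule exists_far)
    show "S i \<noteq> {}" "S (Suc i) \<noteq> {}" using assms(2) that by auto
    show "S (Suc i) \<subseteq> S i" using assms(3) that by auto
    have "i \<in> {1..T}" "Suc i \<in> {1..T}" "i \<noteq> Suc i" using that by auto
    then have "S i \<subseteq> K" using assms(2) by blast
    then show "bounded (S i)" using bK bounded_subset by blast
    show "hausdorff_dist (S i) (S (Suc i)) > \<epsilon>"
      using assms(4) \<open>i \<in> {1..T}\<close> \<open>Suc i \<in> {1..T}\<close> \<open>i \<noteq> Suc i\<close> by blast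
  qed
  define p where "p i = (if i < T then (SOME a. a \<in> S i \<and> infdist a (S (Suc i)) > \<epsilon>)
      else (SOME a. a \<in> S i))" for i
  have pin: "p i \<in> S i" if "1 \<le> i" "i \<le> T" for i
  proof (cases "i < T")
    case True
    then show ?thesis using far[OF that(1) True] unfolding p_def
      by (metis (mono_tags, lifting) someI_ex)
  next
    case False
    then show ?thesis using assms(2) that unfolding p_def
      by (simp add: some_in_eq)
  qed
  have pfar: "infdist (p i) (S (Suc i)) > \<epsilon>" if "1 \<le> i" "i < T" for i
    using far[OF that] that unfolding p_def
    by (metis (mono_tags, lifting) someI_ex)
  have pd: "dist (p i) (p j) > \<epsilon>" if "1 \<le> i" "i < j" "j \<le> T" for i j
  proof -
    have "p j \<in> S (Suc i)"
      using pin[of j] nested_le[OF assms(3), of "Suc i" j] that by auto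
    then have "infdist (p i) (S (Suc i)) \<le> dist (p i) (p j)" by (rule infdist_le)
    then show ?thesis using pfar[of i] that by auto
  qed
  define \<theta> where "\<theta> k = p (Suc k)" for k
  have "enat T \<in> {enat n | n. \<exists>\<theta> :: nat \<Rightarrow> 'a.
      (\<forall>i<n. \<theta> i \<in> K) \<and> (\<forall>i<n. \<forall>j<n. i \<noteq> j \<longrightarrow> dist (\<theta> i) (\<theta> j) > \<epsilon>)}"
  proof -
    have "\<forall>i<T. \<theta> i \<in> K"
    proof (intro allI impI)
      fix i assume "i < T"
      then have "Suc i \<in> {1..T}" by auto
      then show "\<theta> i \<in> K" using pin[of "Suc i"] assms(2) unfolding \<theta>_def by auto
    qed
    moreover have "\<forall>i<T. \<forall>j<T. i \<noteq> j \<longrightarrow> dist (\<theta> i) (\<theta> j) > \<epsilon>"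
    proof (intro allI impI)
      fix i j assume "i < T" "j < T" "i \<noteq> j"
      then show "dist (\<theta> i) (\<theta> j) > \<epsilon>" unfolding \<theta>_def
        using pd[of "Suc i" "Suc j"] pd[of "Suc j" "Suc i"]
        by (cases "i < j") (auto simp: dist_commute)
    qed
    ultimately show ?thesis by blast
  qed
  then show ?thesis unfolding packing_number_def by (rule Sup_upper)
qed

end
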